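(* If $G$ is a connected cubic graph with $n$ vertices, then $rc(L^2(G))\leq n+1$.
   Context: All graphs are simple, finite and undirected. $L(G)$ is the line graph of $G$ and $L^2(G)=L(L(G))$ is the iterated line graph. For an edge-colouring of a graph (adjacent edges may receive the same colour), a path is rainbow if no two of its edges have the same colour; the graph is rainbow connected if every two vertices are joined by a rainbow path. The rainbow connection number $rc(H)$ of a connected graph $H$ is the smallest number of colours in an edge-colouring making $H$ rainbow connected. *)

theory Defs
  imports Main
begin

type_synonym 'a graph = "'a set \<times> 'a set set"

definition simple_graph :: "'a graph \<Rightarrow> bool" where
  "simple_graph G \<longleftrightarrow> finite (fst G) \<and>
     (\<forall>e\<in>snd G. \<exists>u v. u \<in> fst G \<and> v \<in> fst G \<and> u \<noteq> v \<and> e = {u, v})"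

definition line_graph :: "'a graph \<Rightarrow> 'a set graph" where
  "line_graph G = (snd G, {{e, f} | e f. e \<in> snd G \<and> f \<in> snd G \<and> e \<noteq> f \<and> e \<inter> f \<noteq> {}})"

definition degree :: "'a graph \<Rightarrow> 'a \<Rightarrow> nat" where
  "degree G v = card {e \<in> snd G. v \<in> e}"

definition cubic :: "'a graph \<Rightarrow> bool" where
  "cubic G \<longleftrightarrow> (\<forall>v\<in>fst G. degree G v = 3)"

definition is_path :: "'a graph \<Rightarrow> 'a list \<Rightarrow> bool" where
  "is_path G p \<longleftrightarrow> p \<noteq> [] \<and> distinct p \<and> set p \<subseteq> fst G \<and>
     (\<forall>i < length p - 1. {p ! i, p ! (i + 1)} \<in> snd G)"

definition path_edges :: "'a list \<Rightarrow> 'a set list" where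
  "path_edges p = map (\<lambda>i. {p ! i, p ! (i + 1)}) [0..<length p - 1]"

definition connected_graph :: "'a graph \<Rightarrow> bool" where
  "connected_graph G \<longleftrightarrow> fst G \<noteq> {} \<and>
     (\<forall>u\<in>fst G. \<forall>v\<in>fst G. \<exists>p. is_path G p \<and> hd p = u \<and> last p = v)"

definition rainbow_path :: "('a set \<Rightarrow> nat) \<Rightarrow> 'a list \<Rightarrow> bool" where
  "rainbow_path c p \<longleftrightarrow> distinct (map c (path_edges p))"

definition rainbow_connected :: "'a graph \<Rightarrow> ('a set \<Rightarrow> nat) \<Rightarrow> bool" where
  "rainbow_connected G c \<longleftrightarrow>
     (\<forall>u\<in>fst G. \<forall>v\<in>fst G. \<exists>p. is_path G p \<and> hd p = u \<and> last p = v \<and> rainbow_path c p)"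

definition rc :: "'a graph \<Rightarrow> nat" where
  "rc G = (LEAST k. \<exists>c :: 'a set \<Rightarrow> nat. (\<forall>e\<in>snd G. c e < k) \<and> rainbow_connected G c)"

end

theory Submission
  imports Defs
begin



fun wk :: "'a set set \<Rightarrow> 'a list \<Rightarrow> bool" where
  "wk T [] = False"
| "wk T [x] = True"
| "wk T (x#y#r) = ({x,y} \<in> T \<and> wk T (y#r))"

lemma wk_idx: "p \<noteq> [] \<Longrightarrow> wk T p \<longleftrightarrow> (\<forall>i < length p - 1. {p!i, p!(i+1)} \<in> T)"
proof (induction T p rule: wk.induct)
  case (3 T x y r)
  show ?case using 3 by (simp add: All_less_Suc2)
qed auto

lemma is_path_wk: "is_path G p \<longleftrightarrow> p \<noteq> [] \<and> distinct p \<and> set p \<subseteq> fst G \<and> wk (snd G) p"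
  unfolding is_path_def using wk_idx by blast

lemma path_edges_simps[simp]:
  "path_edges [] = []" "path_edges [x] = []"
  "path_edges (x#y#r) = {x,y} # path_edges (y#r)"
proof -
  show "path_edges [] = []" "path_edges [x] = []" by (simp_all add: path_edges_def)
  have "[0..<length (x#y#r) - 1] = 0 # map Suc [0..<length (y#r) - 1]"
    by (simp add: upt_conv_Cons map_Suc_upt del: upt_Suc)
  then show "path_edges (x#y#r) = {x,y} # path_edges (y#r)"
    by (simp add: path_edges_def)
qed

lemma wk_mono: "wk T p \<Longrightarrow> T \<subseteq> T' \<Longrightarrow> wk T' p"
  by (induction T p rule: wk.induct) auto

lemma wk_append: "wk T (p @ x # q) \<longleftrightarrow> wk T (p @ [x]) \<and> wk T (x # q)"
proof (induction p)
  case (Cons a p)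
  then show ?case by (cases p) auto
qed simp

lemma path_edges_append: "path_edges (p @ x # q) = path_edges (p @ [x]) @ path_edges (x # q)"
proof (induction p)
  case (Cons a p)
  then show ?case by (cases p) auto
qed simp

lemma path_edges_subset: "e \<in> set (path_edges p) \<Longrightarrow> e \<subseteq> set p"
proof (induction p arbitrary: e)
  case (Cons a p)
  then show ?case by (cases p) auto
qed simp

lemma path_edges_distinct: "distinct p \<Longrightarrow> distinct (path_edges p)"
proof (induction p)
  case (Cons a p)
  then show ?case by (cases p) (auto dest: path_edges_subset)
qed simp

lemma wk_edges: "wk T p \<Longrightarrow> set (path_edges p) \<subseteq> T"
  by (induction T p rule: wk.induct) auto

lemma wk_leave: "wk E p \<Longrightarrow> hd p \<in> S \<Longrightarrow> last p \<notin> S \<Longrightarrow> \<exists>a b. {a,b} \<in> E \<and> a \<in> S \<and> b \<notin> S"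
  by (induction E p rule: wk.induct) auto




lemma wk_snoc: "p \<noteq> [] \<Longrightarrow> wk T (p @ [z]) \<longleftrightarrow> wk T p \<and> {last p, z} \<in> T"
proof (induction p)
  case (Cons a p)
  then show ?case by (cases p) auto
qed simp

lemma wk_Cons: "p \<noteq> [] \<Longrightarrow> wk T (x # p) \<longleftrightarrow> {x, hd p} \<in> T \<and> wk T p"
  by (cases p) auto

lemma path_edges_snoc: "p \<noteq> [] \<Longrightarrow> path_edges (p @ [x]) = path_edges p @ [{last p, x}]"
proof (induction p)
  case (Cons a p)
  then show ?case by (cases p) auto
qed simp

fun nb :: "'a list \<Rightarrow> bool" where
  "nb (a#b#c#r) = (a \<noteq> c \<and> nb (b#c#r))"
| "nb _ = True"

lemma nb_idx: "nb p \<longleftrightarrow> (\<forall>i. i + 2 < length p \<longrightarrow> p!i \<noteq> p!(i+2))"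
proof (induction p rule: nb.induct)
  case (1 a b c r)
  show ?case
  proof
    assume "nb (a#b#c#r)"
    then show "\<forall>i. i + 2 < length (a#b#c#r) \<longrightarrow> (a#b#c#r)!i \<noteq> (a#b#c#r)!(i+2)"
      using 1 by (auto simp: nth_Cons split: nat.split)
  next
    assume h: "\<forall>i. i + 2 < length (a#b#c#r) \<longrightarrow> (a#b#c#r)!i \<noteq> (a#b#c#r)!(i+2)"
    have "a \<noteq> c" using h[rule_format, of 0] by simp
    moreover have "\<forall>i. i + 2 < length (b#c#r) \<longrightarrow> (b#c#r)!i \<noteq> (b#c#r)!(i+2)"
      using h[rule_format, of "Suc _"] by auto
    ultimately show "nb (a#b#c#r)" using 1 by simp
  qed
qed auto

lemma distinct_nb: "distinct p \<Longrightarrow> nb p"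
  unfolding nb_idx by (auto simp: nth_eq_iff_index_eq)

fun chain :: "'a list \<Rightarrow> 'a set set list" where
  "chain (a#b#c#r) = {{a,b},{b,c}} # chain (b#c#r)"
| "chain _ = []"

lemma chain_append: "chain (p @ x # y # q) = chain (p @ [x,y]) @ chain (x#y#q)"
proof (induction p)
  case (Cons u p)
  then show ?case by (cases p; cases "tl p") auto
qed simp

lemma nb_Cons: "nb (x # p) \<longleftrightarrow> nb p \<and> (2 \<le> length p \<longrightarrow> x \<noteq> p!1)"
  by (cases p; cases "tl p") auto

lemma nb_snoc3: "nb (q @ [a,b,z]) \<longleftrightarrow> nb (q @ [a,b]) \<and> a \<noteq> z"
proof (induction q)
  case (Cons x q)
  have "(q @ [a,b,z]) ! 1 = (q @ [a,b]) ! 1"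
    by (cases q) (auto simp: nth_append)
  then show ?case using Cons by (simp add: nb_Cons) blast
qed simp




locale cub =
  fixes V :: "'a set" and E :: "'a set set"
  assumes finV: "finite V"
  and edges: "\<And>e. e \<in> E \<Longrightarrow> \<exists>u v. u \<in> V \<and> v \<in> V \<and> u \<noteq> v \<and> e = {u,v}"
  and deg: "\<And>v. v \<in> V \<Longrightarrow> card {e \<in> E. v \<in> e} = 3"
begin

lemma finE: "finite E"
proof -
  have "E \<subseteq> Pow V" using edges by blast
  then show ?thesis using finV by (meson finite_Pow_iff finite_subset)
qed

lemma edge_ne: "{a,b} \<in> E \<Longrightarrow> a \<noteq> b"
  using edges by (force simp: doubleton_eq_iff)

lemma edge_V: "e \<in> E \<Longrightarrow> x \<in> e \<Longrightarrow> x \<in> V"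
  using edges by blast

lemma edge_other: assumes "e \<in> E" "w \<in> e" shows "\<exists>y. y \<noteq> w \<and> e = {w, y}"
proof -
  obtain u v where "u \<noteq> v" "e = {u,v}" using edges[OF assms(1)] by blast
  then show ?thesis using assms(2) by auto
qed

lemma edge_eq2: assumes "e \<in> E" "w \<in> e" "w' \<in> e" "w \<noteq> w'" shows "e = {w,w'}"
proof -
  obtain u v where "u \<noteq> v" "e = {u,v}" using edges[OF assms(1)] by blast
  then show ?thesis using assms(2-4) by auto
qed

lemma inter_unique: "e \<in> E \<Longrightarrow> f \<in> E \<Longrightarrow> e \<noteq> f \<Longrightarrow> w \<in> e \<Longrightarrow> w \<in> f \<Longrightarrow> w' \<in> e \<Longrightarrow> w' \<in> f \<Longrightarrow> w = w'"
  using edge_eq2 by metis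

definition LV :: "'a set set set" where
  "LV = {{e,f} | e f. e \<in> E \<and> f \<in> E \<and> e \<noteq> f \<and> e \<inter> f \<noteq> {}}"
definition L2 :: "'a set set set set" where
  "L2 = {{X,Y} | X Y. X \<in> LV \<and> Y \<in> LV \<and> X \<noteq> Y \<and> X \<inter> Y \<noteq> {}}"

lemma L2I: "X \<in> LV \<Longrightarrow> Y \<in> LV \<Longrightarrow> X \<noteq> Y \<Longrightarrow> X \<inter> Y \<noteq> {} \<Longrightarrow> {X,Y} \<in> L2"
  unfolding L2_def by blast

lemma L2E: "\<epsilon> \<in> L2 \<Longrightarrow> \<exists>X Y. \<epsilon> = {X,Y} \<and> X \<in> LV \<and> Y \<in> LV \<and> X \<noteq> Y \<and> X \<inter> Y \<noteq> {}"
  unfolding L2_def by blast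

lemma LG1: "line_graph (V,E) = (E, LV)"
  by (simp add: line_graph_def LV_def)
lemma LG2: "line_graph (E,LV) = (LV, L2)"
  by (simp add: line_graph_def L2_def)

definition central :: "'a set set \<Rightarrow> 'a \<Rightarrow> bool" where
  "central X w \<longleftrightarrow> (\<forall>e\<in>X. w \<in> e)"
definition cen :: "'a set set \<Rightarrow> 'a" where
  "cen X = (THE w. central X w)"

lemma LV_cen1: assumes "X \<in> LV" shows "\<exists>!w. central X w"
proof -
  obtain e f w where ef: "X = {e,f}" "e \<in> E" "f \<in> E" "e \<noteq> f" "w \<in> e" "w \<in> f"
    using assms unfolding LV_def by blast
  have "central X w" using ef by (simp add: central_def)
  moreover have "w' = w" if "central X w'" for w'
    using that ef inter_unique[of e f w' w] by (simp add: central_def)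
  ultimately show ?thesis by blast
qed

lemma cen: "X \<in> LV \<Longrightarrow> central X (cen X)"
  unfolding cen_def by (rule theI'[OF LV_cen1])

lemma cen_eq: assumes "X \<in> LV" "central X w" shows "cen X = w"
proof -
  have u: "\<exists>!w. central X w" using LV_cen1[OF assms(1)] .
  from u cen[OF assms(1)] assms(2) show ?thesis by blast
qed

lemma LV_elems: assumes "X \<in> LV" shows "\<exists>e f. X = {e,f} \<and> e \<in> E \<and> f \<in> E \<and> e \<noteq> f \<and> cen X \<in> e \<and> cen X \<in> f"
proof -
  obtain e f where ef: "X = {e,f}" "e \<in> E" "f \<in> E" "e \<noteq> f"
    using assms unfolding LV_def by blast
  have "central X (cen X)" using cen[OF assms] .
  then show ?thesis using ef unfolding central_def by blast
qed

lemma cen_V: "X \<in> LV \<Longrightarrow> cen X \<in> V"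
  using LV_elems edge_V by blast

lemma LVI: "e \<in> E \<Longrightarrow> f \<in> E \<Longrightarrow> e \<noteq> f \<Longrightarrow> x \<in> e \<Longrightarrow> x \<in> f \<Longrightarrow> {e,f} \<in> LV"
  unfolding LV_def by blast

lemma ang_ne: "a \<noteq> c \<Longrightarrow> {a,b} \<noteq> {b,c}"
  by (auto simp add: doubleton_eq_iff)

lemma ang_LV: "{a,b} \<in> E \<Longrightarrow> {b,c} \<in> E \<Longrightarrow> a \<noteq> c \<Longrightarrow> {{a,b},{b,c}} \<in> LV"
  by (rule LVI[of _ _ b]) (simp_all add: ang_ne)

lemma cen_ang: "{a,b} \<in> E \<Longrightarrow> {b,c} \<in> E \<Longrightarrow> a \<noteq> c \<Longrightarrow> cen {{a,b},{b,c}} = b"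
  by (rule cen_eq[OF ang_LV]) (simp_all add: central_def)

lemma ang_L2:
  assumes "{a,b} \<in> E" "{b,c} \<in> E" "{c,d} \<in> E" "a \<noteq> c" "b \<noteq> d"
  shows "{{{a,b},{b,c}}, {{b,c},{c,d}}} \<in> L2"
    and "{{a,b},{b,c}} \<inter> {{b,c},{c,d}} = {{b,c}}"
proof -
  have bc: "b \<noteq> c" using assms edge_ne by blast
  have n1: "{a,b} \<noteq> {c,d}" using assms(4) bc by (simp add: doubleton_eq_iff)
  have n2: "{a,b} \<noteq> {b,c}" using assms(4) by (rule ang_ne)
  have n3: "{b,c} \<noteq> {c,d}" using assms(5) by (auto simp add: doubleton_eq_iff)
  show i: "{{a,b},{b,c}} \<inter> {{b,c},{c,d}} = {{b,c}}"
    using n1 n2 n3 by blast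
  have "{{a,b},{b,c}} \<noteq> {{b,c},{c,d}}" using n1 n2 n3 by (simp add: doubleton_eq_iff)
  then show "{{{a,b},{b,c}}, {{b,c},{c,d}}} \<in> L2"
    using L2I ang_LV assms i by simp
qed

definition shr :: "'a set set set \<Rightarrow> 'a set" where
  "shr \<epsilon> = the_elem (\<Inter>\<epsilon>)"

lemma shr2: "X \<inter> Y = {g} \<Longrightarrow> shr {X,Y} = g"
  unfolding shr_def by simp

lemma chain_props:
  assumes "wk E (a#b#c#r)" "nb (a#b#c#r)"
  shows "set (chain (a#b#c#r)) \<subseteq> LV \<and> map cen (chain (a#b#c#r)) = b # butlast (c#r)
    \<and> wk L2 (chain (a#b#c#r)) \<and> map shr (path_edges (chain (a#b#c#r))) = path_edges (b # butlast (c#r))"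
  using assms
proof (induction r arbitrary: a b c)
  case Nil
  then have "{a,b} \<in> E" "{b,c} \<in> E" "a \<noteq> c" by simp_all
  then show ?case by (simp add: ang_LV cen_ang)
next
  case (Cons d r)
  have IH: "set (chain (b#c#d#r)) \<subseteq> LV \<and> map cen (chain (b#c#d#r)) = c # butlast (d#r)
    \<and> wk L2 (chain (b#c#d#r)) \<and> map shr (path_edges (chain (b#c#d#r))) = path_edges (c # butlast (d#r))"
  proof -
    have p1: "wk E (b#c#d#r)" using Cons.prems(1) by simp
    have p2: "nb (b#c#d#r)" using Cons.prems(2) by simp
    show ?thesis using Cons.IH[OF p1 p2] .
  qed
  have e: "{a,b} \<in> E" "{b,c} \<in> E" "{c,d} \<in> E" "a \<noteq> c" "b \<noteq> d" using Cons.prems by simp_all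
  note L = ang_L2[OF e]
  have sh: "shr {{{a,b},{b,c}}, {{b,c},{c,d}}} = {b,c}"
    using L(2) by (rule shr2)
  have X: "{{a,b},{b,c}} \<in> LV" "cen {{a,b},{b,c}} = b" using e by (simp_all add: ang_LV cen_ang)
  have ch: "chain (b#c#d#r) = {{b,c},{c,d}} # chain (c#d#r)" by simp
  show ?case using IH X L(1) sh unfolding ch by simp
qed

end



locale cubT = cub +
  fixes T :: "'a set set" and idx :: "'a set \<Rightarrow> nat" and m :: nat
  assumes TE: "T \<subseteq> E" and idx_inj: "inj_on idx T" and idx_lt: "\<And>g. g \<in> T \<Longrightarrow> idx g < m - 1"
  and m1: "1 \<le> m"
  and Tconn: "\<And>u v. u \<in> V \<Longrightarrow> v \<in> V \<Longrightarrow> \<exists>p. wk T p \<and> hd p = u \<and> last p = v"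
begin

definition pick :: "'a \<Rightarrow> 'a set" where
  "pick w = (SOME x. x \<in> E \<and> x \<notin> T \<and> w \<in> x)"

definition col :: "'a set set set \<Rightarrow> nat" where
  "col \<epsilon> = (if shr \<epsilon> \<in> T then idx (shr \<epsilon>)
     else if (\<exists>w. (\<forall>x\<in>\<Union>\<epsilon>. w \<in> x) \<and> shr \<epsilon> = pick w) then m - 1 else m)"

lemma col_le: "col \<epsilon> \<le> m"
proof -
  have "shr \<epsilon> \<in> T \<Longrightarrow> idx (shr \<epsilon>) \<le> m" using idx_lt[of "shr \<epsilon>"] by linarith
  then show ?thesis unfolding col_def by simp
qed

lemma min_walk:
  assumes "u \<in> V" "v \<in> V"
  shows "\<exists>xs. wk T xs \<and> hd xs = u \<and> last xs = v \<and> distinct xs \<and> (3 \<le> length xs \<longrightarrow> {u,v} \<notin> T)"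
proof -
  let ?P = "\<lambda>xs. wk T xs \<and> hd xs = u \<and> last xs = v"
  obtain p where "?P p" using Tconn assms by blast
  then obtain xs where xs: "?P xs" and mn: "\<And>ys. ?P ys \<Longrightarrow> length xs \<le> length ys"
    using ex_has_least_nat[of ?P p length] by blast
  have dist: "distinct xs"
  proof (rule ccontr)
    assume "\<not> distinct xs"
    then obtain as y bs cs where d: "xs = as @ [y] @ bs @ [y] @ cs" using not_distinct_decomp by blast
    let ?ys = "as @ y # cs"
    have w1: "wk T (as @ [y])" and w2: "wk T (y # bs @ y # cs)"
      using xs d wk_append[of T as y "bs @ y # cs"] by auto
    have w3: "wk T (y # cs)" using w2 wk_append[of T "y # bs" y cs] by simp
    have "wk T ?ys" using w1 w3 wk_append[of T as y cs] by simp
    moreover have "hd ?ys = u" using xs d by (cases as) auto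
    moreover have "last ?ys = v" using xs d by (cases cs) auto
    ultimately have "length xs \<le> length ?ys" using mn by blast
    then show False using d by simp
  qed
  moreover have "{u,v} \<notin> T" if "3 \<le> length xs"
  proof
    assume "{u,v} \<in> T"
    then have "?P [u,v]" by simp
    then show False using mn[of "[u,v]"] that by simp
  qed
  ultimately show ?thesis using xs by blast
qed

lemma star3:
  assumes "w \<in> V" "e \<in> E" "f \<in> E" "t \<in> E" "w \<in> e" "w \<in> f" "w \<in> t" "e \<noteq> f" "e \<noteq> t" "f \<noteq> t"
  shows "{x \<in> E. w \<in> x} = {e,f,t}"
proof -
  have fin: "finite {x \<in> E. w \<in> x}" using finE by simp
  have sub: "{e,f,t} \<subseteq> {x \<in> E. w \<in> x}" using assms by blast
  have c: "card {e,f,t} = 3" using assms by simp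
  show ?thesis using card_subset_eq[OF fin sub] c deg[OF assms(1)] by simp
qed

lemma rot:
  assumes "\<alpha> = {e,f}" "e \<in> E" "f \<in> E" "t \<in> E" "e \<noteq> f" "e \<noteq> t" "f \<noteq> t"
    "w \<in> e" "w \<in> f" "w \<in> t" "s \<in> {e,f}"
  shows "\<alpha> \<noteq> {s,t}" "{\<alpha>,{s,t}} \<in> L2" "{s,t} \<in> LV" "shr {\<alpha>,{s,t}} = s" "\<Union>{\<alpha>,{s,t}} = {e,f,t}"
proof -
  obtain h where h: "\<alpha> = {s,h}" "h \<in> E" "h \<noteq> s" "h \<noteq> t" "w \<in> h" "s \<in> E" "w \<in> s" "s \<noteq> t"
  proof (cases "s = e")
    case True
    then show ?thesis using that[of f] assms by simp
  next
    case False
    then have "s = f" using assms(11) by simp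
    then show ?thesis using that[of e] assms by (simp add: insert_commute)
  qed
  show n: "\<alpha> \<noteq> {s,t}" using h by blast
  have i: "\<alpha> \<inter> {s,t} = {s}" using h by blast
  show st: "{s,t} \<in> LV" using LVI[of s t w] h assms by simp
  have "\<alpha> \<in> LV" using LVI[of s h w] h by simp
  then show "{\<alpha>,{s,t}} \<in> L2" using L2I st n i by simp
  show "shr {\<alpha>,{s,t}} = s" using i by (rule shr2)
  show "\<Union>{\<alpha>,{s,t}} = {e,f,t}" using assms(1,11) by blast
qed

lemma end_choice:
  assumes \<alpha>: "\<alpha> \<in> LV" and t: "t \<in> T" and wt: "cen \<alpha> \<in> t"
  shows "\<exists>s. s \<in> \<alpha> \<and> s \<noteq> t \<and> cen \<alpha> \<in> s \<and> (\<alpha> = {s,t} \<or> (\<alpha> \<noteq> {s,t} \<and> {\<alpha>,{s,t}} \<in> L2 \<and> {s,t} \<in> LV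
     \<and> col {\<alpha>,{s,t}} = (if s \<in> T then idx s else if fl then m-1 else m)))"
proof -
  define w where "w = cen \<alpha>"
  obtain e f where ef: "\<alpha> = {e,f}" "e \<in> E" "f \<in> E" "e \<noteq> f" "w \<in> e" "w \<in> f"
    using LV_elems[OF \<alpha>] w_def by blast
  have tE: "t \<in> E" using t TE by blast
  have wV: "w \<in> V" using cen_V \<alpha> w_def by simp
  have wt': "w \<in> t" using wt w_def by simp
  show ?thesis
  proof (cases "t \<in> \<alpha>")
    case True
    then have "t = e \<or> t = f" using ef by blast
    then show ?thesis
    proof
      assume te: "t = e"
      have "f \<in> \<alpha> \<and> f \<noteq> t \<and> cen \<alpha> \<in> f \<and> \<alpha> = {f,t}" using ef te w_def by (simp add: insert_commute)
      then show ?thesis by blast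
    next
      assume tf: "t = f"
      have "e \<in> \<alpha> \<and> e \<noteq> t \<and> cen \<alpha> \<in> e \<and> \<alpha> = {e,t}" using ef tf w_def by simp
      then show ?thesis by blast
    qed
  next
    case False
    then have et: "e \<noteq> t" "f \<noteq> t" using ef by auto
    have star: "{x \<in> E. w \<in> x} = {e,f,t}" using star3[OF wV ef(2,3) tE ef(5,6) wt' ef(4) et] .
    note R = rot[OF ef(1,2,3) tE ef(4) et ef(5,6) wt']
    have good: "\<exists>s. s \<in> \<alpha> \<and> s \<noteq> t \<and> cen \<alpha> \<in> s \<and> (\<alpha> = {s,t} \<or> (\<alpha> \<noteq> {s,t} \<and> {\<alpha>,{s,t}} \<in> L2 \<and> {s,t} \<in> LV
     \<and> col {\<alpha>,{s,t}} = (if s \<in> T then idx s else if fl then m-1 else m)))"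
      if s: "s \<in> {e,f}" and cs: "col {\<alpha>,{s,t}} = (if s \<in> T then idx s else if fl then m-1 else m)" for s
    proof -
      have "s \<in> \<alpha> \<and> s \<noteq> t \<and> cen \<alpha> \<in> s" using s ef et w_def by blast
      then show ?thesis using R[OF s] cs by blast
    qed
    have colT: "col {\<alpha>,{s,t}} = idx s" if "s \<in> {e,f}" "s \<in> T" for s
      using R(4)[OF that(1)] that(2) unfolding col_def by simp
    consider (a) "e \<in> T" | (b) "e \<notin> T" "f \<in> T" | (c) "e \<notin> T" "f \<notin> T" by blast
    then show ?thesis
    proof cases
      case a
      then show ?thesis using good[of e] colT[of e] by simp
    next
      case b
      then show ?thesis using good[of f] colT[of f] by simp
    next
      case c
      have ex: "\<exists>x. x \<in> E \<and> x \<notin> T \<and> w \<in> x" using ef c by blast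
      have p: "pick w \<in> E \<and> pick w \<notin> T \<and> w \<in> pick w" unfolding pick_def using someI_ex[OF ex] .
      then have "pick w \<in> {e,f,t}" using star by blast
      then have pef: "pick w = e \<or> pick w = f" using p t by blast
      define s where "s = (if fl then pick w else (if pick w = e then f else e))"
      have s: "s \<in> {e,f}" using pef s_def by auto
      have sT: "s \<notin> T" using s c by blast
      have sh: "shr {\<alpha>,{s,t}} = s" and U: "\<Union>{\<alpha>,{s,t}} = {e,f,t}" using R(4,5)[OF s] by simp_all
      have cs: "col {\<alpha>,{s,t}} = (if fl then m-1 else m)"
      proof (cases fl)
        case True
        then have "s = pick w" using s_def by simp
        moreover have "\<forall>x\<in>{e,f,t}. w \<in> x" using ef wt' by simp
        ultimately show ?thesis unfolding col_def sh U using sT True by auto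
      next
        case False
        then have sp: "s \<noteq> pick w" using s_def pef ef(4) by auto
        have "\<not> (\<exists>w'. (\<forall>x\<in>{e,f,t}. w' \<in> x) \<and> s = pick w')"
        proof
          assume "\<exists>w'. (\<forall>x\<in>{e,f,t}. w' \<in> x) \<and> s = pick w'"
          then obtain w' where w': "w' \<in> e" "w' \<in> f" "s = pick w'" by blast
          have "w' = w" using inter_unique[OF ef(2,3,4) w'(1,2) ef(5,6)] .
          then show False using sp w'(3) by simp
        qed
        then show ?thesis unfolding col_def sh U using sT False by auto
      qed
      show ?thesis using good[OF s] cs sT by simp
    qed
  qed
qed

end



lemma two_last: assumes "2 \<le> length xs" shows "\<exists>p a b. xs = p @ [a,b]"
proof -
  obtain b r' where 1: "rev xs = b # r'" using assms by (cases "rev xs") auto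
  have "length (rev xs) = length xs" by simp
  then obtain a r where 2: "r' = a # r" using assms 1 by (cases r') auto
  have "xs = rev (rev xs)" by simp
  also have "\<dots> = rev r @ [a,b]" using 1 2 by simp
  finally show ?thesis by blast
qed

lemma cen_hd_gen: "map f M = xs \<Longrightarrow> distinct xs \<Longrightarrow> X \<in> set M \<Longrightarrow> f X = hd xs \<Longrightarrow> X = hd M"
proof -
  assume a: "map f M = xs" "distinct xs" "X \<in> set M" "f X = hd xs"
  obtain i where i: "i < length M" "X = M ! i" using a(3) by (auto simp: in_set_conv_nth)
  have ne: "M \<noteq> []" using a(3) by auto
  have "xs ! i = xs ! 0" using a i ne by (auto simp: hd_conv_nth)
  then have "i = 0" using a(1,2) i(1) nth_eq_iff_index_eq[of xs i 0] ne by auto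
  then show ?thesis using i ne by (simp add: hd_conv_nth)
qed

lemma cen_last_gen: "map f M = xs \<Longrightarrow> distinct xs \<Longrightarrow> X \<in> set M \<Longrightarrow> f X = last xs \<Longrightarrow> X = last M"
  using cen_hd_gen[of f "rev M" "rev xs" X] by (simp add: hd_rev rev_map[symmetric])

context cubT begin

lemma connect:
  assumes \<alpha>: "\<alpha> \<in> LV" and \<beta>: "\<beta> \<in> LV" and ne: "cen \<alpha> \<noteq> cen \<beta>"
  shows "\<exists>P. P \<noteq> [] \<and> distinct P \<and> set P \<subseteq> LV \<and> wk L2 P \<and> hd P = \<alpha> \<and> last P = \<beta>
     \<and> distinct (map col (path_edges P))"
proof -
  define w where "w = cen \<alpha>"
  define w' where "w' = cen \<beta>"
  have wV: "w \<in> V" and w'V: "w' \<in> V" using cen_V \<alpha> \<beta> w_def w'_def by simp_all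
  have ww: "w \<noteq> w'" using ne w_def w'_def by simp
  obtain xs where xs: "wk T xs" "hd xs = w" "last xs = w'" "distinct xs" "3 \<le> length xs \<longrightarrow> {w,w'} \<notin> T"
    using min_walk[OF wV w'V] by blast
  obtain x1 r1 where xs1: "xs = w # x1 # r1"
  proof (cases xs)
    case Nil then show ?thesis using xs(1) by simp
  next
    case (Cons a r)
    then show ?thesis using xs(2,3) ww that by (cases r) auto
  qed
  obtain p0 u b where xs2': "xs = p0 @ [u,b]" using two_last[of xs] xs1 by auto
  have xs2: "xs = p0 @ [u,w']" using xs2' xs(3) by simp
  have t1T: "{w,x1} \<in> T" using xs(1) xs1 by simp
  have tkT: "{u,w'} \<in> T" using xs(1) xs2 wk_append[of T p0 u "[w']"] by simp
  obtain s where S: "s \<in> \<alpha>" "s \<noteq> {w,x1}" "w \<in> s"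
    "\<alpha> = {s,{w,x1}} \<or> (\<alpha> \<noteq> {s,{w,x1}} \<and> {\<alpha>,{s,{w,x1}}} \<in> L2 \<and> {s,{w,x1}} \<in> LV
     \<and> col {\<alpha>,{s,{w,x1}}} = (if s \<in> T then idx s else m-1))"
  proof -
    have wt1: "cen \<alpha> \<in> {w,x1}" using w_def by simp
    note ec = end_choice[OF \<alpha> t1T wt1, of True]
    have "cen \<alpha> = w" using w_def by simp
    then show ?thesis using ec that by (simp only: if_True) blast
  qed
  obtain s' where S': "s' \<in> \<beta>" "s' \<noteq> {u,w'}" "w' \<in> s'"
    "\<beta> = {s',{u,w'}} \<or> (\<beta> \<noteq> {s',{u,w'}} \<and> {\<beta>,{s',{u,w'}}} \<in> L2 \<and> {s',{u,w'}} \<in> LV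
     \<and> col {\<beta>,{s',{u,w'}}} = (if s' \<in> T then idx s' else m))"
  proof -
    have wt1: "cen \<beta> \<in> {u,w'}" using w'_def by simp
    note ec = end_choice[OF \<beta> tkT wt1, of False]
    have "cen \<beta> = w'" using w'_def by simp
    then show ?thesis using ec that by (simp only: if_False) blast
  qed
  have sE: "s \<in> E" using S(1) LV_elems[OF \<alpha>] by blast
  have s'E: "s' \<in> E" using S'(1) LV_elems[OF \<beta>] by blast
  obtain y where y: "y \<noteq> w" "s = {w,y}" using edge_other[OF sE S(3)] by blast
  obtain z where z: "z \<noteq> w'" "s' = {w',z}" using edge_other[OF s'E S'(3)] by blast
  have yx1: "y \<noteq> x1" using S(2) y by blast
  have zu: "z \<noteq> u" using S'(2) z by (auto simp: insert_commute)
  define ys where "ys = y # xs @ [z]"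
  have ys1: "ys = y # w # x1 # (r1 @ [z])" using ys_def xs1 by simp
  have ys2: "ys = (y # p0) @ [u, w', z]" using ys_def xs2 by simp
  have wkE: "wk E xs" using wk_mono[OF xs(1) TE] .
  have "wk E (xs @ [z])" using wkE xs(3) s'E z wk_snoc[of xs E z] xs1 by simp
  then have wys: "wk E ys" unfolding ys_def using wk_Cons[of "xs @ [z]" E y] xs1 sE y
    by (simp add: insert_commute)
  have nbxs: "nb xs" using distinct_nb xs(4) .
  have "nb (p0 @ [u,w',z])" using nb_snoc3[of p0 u w' z] nbxs xs2 zu by simp
  then have "nb (w # x1 # (r1 @ [z]))" using xs1 xs2
    by (metis append_Cons append_assoc append_Cons append_Nil)
  then have nys: "nb ys" using ys1 yx1 by simp
  have CP: "set (chain ys) \<subseteq> LV \<and> map cen (chain ys) = w # butlast (x1 # (r1 @ [z]))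
    \<and> wk L2 (chain ys) \<and> map shr (path_edges (chain ys)) = path_edges (w # butlast (x1 # (r1 @ [z])))"
    using chain_props[of y w x1 "r1 @ [z]"] wys nys ys1 by simp
  have bl: "w # butlast (x1 # (r1 @ [z])) = xs" using xs1 by (simp add: butlast_append)
  define M where "M = chain ys"
  have MLV: "set M \<subseteq> LV" and Mcen: "map cen M = xs" and Mwk: "wk L2 M"
    and Msh: "map shr (path_edges M) = path_edges xs"
    using CP[unfolded bl] M_def by simp_all
  have Mne: "M \<noteq> []" using Mcen xs1 by auto
  have hdM: "hd M = {s,{w,x1}}" using M_def ys1 y by (simp add: insert_commute)
  have "chain ys = chain ((y#p0) @ [u,w']) @ chain [u,w',z]"
    using ys2 chain_append[of "y#p0" u w' "[z]"] by simp
  then have lastM: "last M = {s',{u,w'}}" using M_def z by (simp add: insert_commute)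
  define ts where "ts = path_edges xs"
  have tsT: "set ts \<subseteq> T" using wk_edges[OF xs(1)] ts_def by simp
  have dts: "distinct ts" using path_edges_distinct[OF xs(4)] ts_def by simp
  have colM: "map col (path_edges M) = map idx ts"
  proof -
    have "\<forall>\<epsilon>\<in>set (path_edges M). shr \<epsilon> \<in> T"
    proof
      fix \<epsilon> assume "\<epsilon> \<in> set (path_edges M)"
      then have "shr \<epsilon> \<in> set (map shr (path_edges M))" by simp
      then show "shr \<epsilon> \<in> T" using Msh tsT ts_def by auto
    qed
    then have "map col (path_edges M) = map (\<lambda>\<epsilon>. idx (shr \<epsilon>)) (path_edges M)"
      unfolding col_def by (intro map_cong) auto
    also have "\<dots> = map idx (map shr (path_edges M))" by simp
    finally show ?thesis using Msh ts_def by simp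
  qed
  have dmts: "distinct (map idx ts)"
    using dts inj_on_subset[OF idx_inj tsT] by (simp add: distinct_map)
  have s_ts: "s \<notin> set ts"
  proof
    assume a: "s \<in> set ts"
    have "ts = {w,x1} # path_edges (x1 # r1)" using ts_def xs1 by simp
    then have "s \<in> set (path_edges (x1 # r1))" using a S(2) by simp
    then have "w \<in> set (x1 # r1)" using path_edges_subset S(3) by blast
    then show False using xs(4) xs1 by simp
  qed
  have s'_ts: "s' \<notin> set ts"
  proof
    assume a: "s' \<in> set ts"
    have "ts = path_edges (p0 @ [u]) @ [{u,w'}]"
      using ts_def xs2 path_edges_snoc[of "p0 @ [u]" w'] by simp
    then have "s' \<in> set (path_edges (p0 @ [u]))" using a S'(2) by simp
    then have "w' \<in> set (p0 @ [u])" using path_edges_subset S'(3) by blast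
    then show False using xs(4) xs2 by simp
  qed
  define ca where "ca = (if s \<in> T then idx s else m-1)"
  define cb where "cb = (if s' \<in> T then idx s' else m)"
  have ca: "ca \<notin> set (map idx ts)"
  proof
    assume "ca \<in> set (map idx ts)"
    then obtain g where g: "g \<in> set ts" "ca = idx g" by auto
    show False
    proof (cases "s \<in> T")
      case True
      then have "s = g" using g ca_def inj_onD[OF idx_inj, of s g] tsT by auto
      then show False using s_ts g by simp
    next
      case False
      then show False using g ca_def idx_lt[of g] tsT by auto
    qed
  qed
  have cb: "cb \<notin> set (map idx ts)"
  proof
    assume "cb \<in> set (map idx ts)"
    then obtain g where g: "g \<in> set ts" "cb = idx g" by auto
    show False
    proof (cases "s' \<in> T")
      case True
      then have "s' = g" using g cb_def inj_onD[OF idx_inj, of s' g] tsT by auto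
      then show False using s'_ts g by simp
    next
      case False
      then show False using g cb_def idx_lt[of g] tsT by auto
    qed
  qed
  have ss': "s \<noteq> s'" if sT: "s \<in> T"
  proof
    assume eq: "s = s'"
    then have "w' \<in> s" using S'(3) by simp
    then have yw': "y = w'" using y ww by auto
    have sww: "s = {w,w'}" using y yw' by simp
    show False
    proof (cases "3 \<le> length xs")
      case True
      then show False using xs(5) sww sT by simp
    next
      case False
      then have "r1 = []" using xs1 by (cases r1) auto
      then have "x1 = w'" using xs1 xs(3) by simp
      then show False using S(2) sww by simp
    qed
  qed
  have cab: "ca \<noteq> cb"
    using ss' idx_lt inj_onD[OF idx_inj] m1 unfolding ca_def cb_def
    by (cases "s \<in> T"; cases "s' \<in> T") (auto, fastforce+)
  define PA where "PA = (if \<alpha> = {s,{w,x1}} then M else \<alpha> # M)"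
  have PA: "PA \<noteq> [] \<and> hd PA = \<alpha> \<and> last PA = last M \<and> set PA \<subseteq> LV \<and> wk L2 PA \<and> distinct PA
    \<and> \<beta> \<notin> set PA - {last M}
    \<and> map col (path_edges PA) = (if \<alpha> = {s,{w,x1}} then [] else [ca]) @ map idx ts"
  proof (cases "\<alpha> = {s,{w,x1}}")
    case True
    have dM: "distinct M" using Mcen xs(4) distinct_map by metis
    have "\<beta> \<in> set M \<Longrightarrow> \<beta> = last M"
      using cen_last_gen[OF Mcen xs(4)] xs(3) w'_def by simp
    then show ?thesis using True PA_def Mne hdM MLV Mwk dM colM by auto
  next
    case False
    then have L: "{\<alpha>,{s,{w,x1}}} \<in> L2" "col {\<alpha>,{s,{w,x1}}} = ca" using S(4) ca_def by auto
    have dM: "distinct M" using Mcen xs(4) distinct_map by metis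
    have aM: "\<alpha> \<notin> set M"
    proof
      assume "\<alpha> \<in> set M"
      then have "\<alpha> = hd M" using cen_hd_gen[OF Mcen xs(4)] xs(2) w_def by simp
      then show False using False hdM by simp
    qed
    have bM: "\<beta> \<in> set M \<Longrightarrow> \<beta> = last M"
      using cen_last_gen[OF Mcen xs(4)] xs(3) w'_def by simp
    have ab: "\<beta> \<noteq> \<alpha>" using ne by auto
    obtain X M' where XM: "M = X # M'" using Mne by (cases M) auto
    have "wk L2 (\<alpha> # M)" using L(1) Mwk hdM XM by simp
    moreover have "path_edges (\<alpha> # M) = {\<alpha>, hd M} # path_edges M" using XM by simp
    moreover have PAe: "PA = \<alpha> # M" using False PA_def by simp
    moreover have "last (\<alpha> # M) = last M" using Mne by simp
    moreover have "set (\<alpha> # M) \<subseteq> LV" using \<alpha> MLV by simp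
    moreover have "distinct (\<alpha> # M)" using aM dM by simp
    moreover have "\<beta> \<notin> set (\<alpha> # M) - {last M}" using bM ab by auto
    moreover have "col {\<alpha>, hd M} = ca" using L(2) hdM by simp
    ultimately show ?thesis using False colM by simp
  qed
  define P where "P = (if \<beta> = {s',{u,w'}} then PA else PA @ [\<beta>])"
  have "P \<noteq> [] \<and> distinct P \<and> set P \<subseteq> LV \<and> wk L2 P \<and> hd P = \<alpha> \<and> last P = \<beta>
     \<and> map col (path_edges P) = (if \<alpha> = {s,{w,x1}} then [] else [ca]) @ map idx ts @ (if \<beta> = {s',{u,w'}} then [] else [cb])"
  proof (cases "\<beta> = {s',{u,w'}}")
    case True
    then show ?thesis using P_def PA lastM by auto
  next
    case False
    then have L: "{\<beta>,{s',{u,w'}}} \<in> L2" "col {\<beta>,{s',{u,w'}}} = cb" using S'(4) cb_def by auto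
    have PAne: "PA \<noteq> []" and PAh: "hd PA = \<alpha>" and PAl: "last PA = last M"
      and PAs: "set PA \<subseteq> LV" and PAw: "wk L2 PA" and PAd: "distinct PA"
      and PAb: "\<beta> \<notin> set PA - {last M}"
      and PAc: "map col (path_edges PA) = (if \<alpha> = {s,{w,x1}} then [] else [ca]) @ map idx ts"
      using PA by blast+
    have bPA: "\<beta> \<notin> set PA" using PAb False lastM by blast
    have e1: "{last PA, \<beta>} = {\<beta>,{s',{u,w'}}}" using PAl lastM by (simp add: insert_commute)
    have Pe: "P = PA @ [\<beta>]" using False P_def by simp
    have "wk L2 (PA @ [\<beta>])" using wk_snoc[OF PAne, of L2 \<beta>] PAw e1 L(1) by simp
    moreover have "path_edges (PA @ [\<beta>]) = path_edges PA @ [{last PA, \<beta>}]"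
      using path_edges_snoc[OF PAne] .
    moreover have "distinct (PA @ [\<beta>])" using PAd bPA by simp
    moreover have "set (PA @ [\<beta>]) \<subseteq> LV" using PAs \<beta> by simp
    moreover have "hd (PA @ [\<beta>]) = \<alpha>" using PAh PAne by simp
    ultimately show ?thesis using Pe PAc e1 L(2) False by simp
  qed
  moreover have "distinct ((if \<alpha> = {s,{w,x1}} then [] else [ca]) @ map idx ts @ (if \<beta> = {s',{u,w'}} then [] else [cb]))"
    using dmts ca cb cab by auto
  ultimately show ?thesis by metis
qed

end



context cub begin

lemma same_cen:
  assumes \<alpha>: "\<alpha> \<in> LV" and \<beta>: "\<beta> \<in> LV" and c: "cen \<alpha> = cen \<beta>" and ne: "\<alpha> \<noteq> \<beta>"
  shows "{\<alpha>,\<beta>} \<in> L2"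
proof -
  define w where "w = cen \<alpha>"
  obtain e f where ef: "\<alpha> = {e,f}" "e \<in> E" "f \<in> E" "e \<noteq> f" "w \<in> e" "w \<in> f"
    using LV_elems[OF \<alpha>] w_def by blast
  obtain e' f' where ef': "\<beta> = {e',f'}" "e' \<in> E" "f' \<in> E" "e' \<noteq> f'" "w \<in> e'" "w \<in> f'"
    using LV_elems[OF \<beta>] w_def c by auto
  have wV: "w \<in> V" using cen_V \<alpha> w_def by simp
  have fin: "finite {x \<in> E. w \<in> x}" using finE by simp
  have sub: "\<alpha> \<union> \<beta> \<subseteq> {x \<in> E. w \<in> x}" using ef ef' by blast
  have "\<alpha> \<inter> \<beta> \<noteq> {}"
  proof
    assume dj: "\<alpha> \<inter> \<beta> = {}"
    have "card (\<alpha> \<union> \<beta>) = card \<alpha> + card \<beta>" by (rule card_Un_disjoint) (use dj ef(1) ef'(1) in simp_all)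
    also have "\<dots> = 4" using ef(1,4) ef'(1,4) by simp
    finally have "4 \<le> card {x \<in> E. w \<in> x}" using card_mono[OF fin sub] by simp
    then show False using deg[OF wV] by simp
  qed
  then show ?thesis using L2I \<alpha> \<beta> ne by simp
qed

end

context cubT begin

lemma rc_conn: "rainbow_connected (LV, L2) col"
  unfolding rainbow_connected_def
proof (intro ballI)
  fix \<alpha> \<beta> assume \<alpha>: "\<alpha> \<in> fst (LV, L2)" and \<beta>: "\<beta> \<in> fst (LV, L2)"
  then have \<alpha>': "\<alpha> \<in> LV" and \<beta>': "\<beta> \<in> LV" by simp_all
  show "\<exists>p. is_path (LV, L2) p \<and> hd p = \<alpha> \<and> last p = \<beta> \<and> rainbow_path col p"
  proof (cases "\<alpha> = \<beta>")
    case True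
    have "is_path (LV, L2) [\<alpha>] \<and> hd [\<alpha>] = \<alpha> \<and> last [\<alpha>] = \<beta> \<and> rainbow_path col [\<alpha>]"
      using True \<alpha>' by (simp add: is_path_wk rainbow_path_def)
    then show ?thesis by blast
  next
    case False
    show ?thesis
    proof (cases "cen \<alpha> = cen \<beta>")
      case True
      have "{\<alpha>,\<beta>} \<in> L2" using same_cen[OF \<alpha>' \<beta>' True False] .
      then have "is_path (LV, L2) [\<alpha>,\<beta>] \<and> hd [\<alpha>,\<beta>] = \<alpha> \<and> last [\<alpha>,\<beta>] = \<beta> \<and> rainbow_path col [\<alpha>,\<beta>]"
        using False \<alpha>' \<beta>' by (simp add: is_path_wk rainbow_path_def)
      then show ?thesis by blast
    next
      case c: False
      obtain P where P: "P \<noteq> []" "distinct P" "set P \<subseteq> LV" "wk L2 P" "hd P = \<alpha>" "last P = \<beta>"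
        "distinct (map col (path_edges P))"
        using connect[OF \<alpha>' \<beta>' c] by blast
      then have "is_path (LV, L2) P \<and> hd P = \<alpha> \<and> last P = \<beta> \<and> rainbow_path col P"
        by (simp add: is_path_wk rainbow_path_def)
      then show ?thesis by blast
    qed
  qed
qed

end



lemma wk_join:
  assumes "wk T p" "wk T q" "last p = hd q"
  shows "wk T (butlast p @ q) \<and> hd (butlast p @ q) = hd p \<and> last (butlast p @ q) = last q"
proof -
  have pne: "p \<noteq> []" using assms(1) by (cases p) simp_all
  have qne: "q \<noteq> []" using assms(2) by (cases q) simp_all
  have p: "p = butlast p @ [last p]" using pne by simp
  have q: "q = hd q # tl q" using qne by simp
  have "wk T (butlast p @ [last p])" using assms(1) p by simp
  moreover have "wk T (last p # tl q)" using assms(2,3) q by simp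
  ultimately have "wk T (butlast p @ last p # tl q)" using wk_append[of T "butlast p" "last p" "tl q"] by simp
  then have w: "wk T (butlast p @ q)" using assms(3) q by simp
  have h: "hd (butlast p @ q) = hd p"
  proof (cases "butlast p = []")
    case True
    then have e: "[last p] = p" using append_butlast_last_id[OF pne] by simp
    have "hd p = last p" by (subst e[symmetric]) simp
    then show ?thesis using True assms(3) by simp
  next
    case False
    have e: "butlast p @ [last p] = p" using append_butlast_last_id[OF pne] .
    have "hd p = hd (butlast p)" by (subst e[symmetric]) (simp add: False)
    then show ?thesis using False by simp
  qed
  have l: "last (butlast p @ q) = last q" using qne by simp
  show ?thesis using w h l by simp
qed

context cub begin

lemma spanning:
  assumes conn: "\<And>u v. u \<in> V \<Longrightarrow> v \<in> V \<Longrightarrow> \<exists>p. wk E p \<and> hd p = u \<and> last p = v"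
    and Vne: "V \<noteq> {}"
  shows "\<exists>T. T \<subseteq> E \<and> card T \<le> card V - 1 \<and> (\<forall>u\<in>V. \<forall>v\<in>V. \<exists>p. wk T p \<and> hd p = u \<and> last p = v)"
proof -
  let ?Q = "\<lambda>k. \<exists>S T. S \<subseteq> V \<and> card S = k \<and> T \<subseteq> E \<and> finite T \<and> card T = k - 1 \<and> (\<forall>e\<in>T. e \<subseteq> S)
     \<and> (\<forall>u\<in>S. \<forall>v\<in>S. \<exists>p. wk T p \<and> hd p = u \<and> last p = v)"
  have grow: "1 \<le> k \<Longrightarrow> k \<le> card V \<Longrightarrow> ?Q k" for k
  proof (induction k)
    case 0 then show ?case by simp
  next
    case (Suc k)
    show ?case
    proof (cases "k = 0")
      case True
      obtain v0 where v0: "v0 \<in> V" using Vne by blast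
      have "{v0} \<subseteq> V \<and> card {v0} = Suc k \<and> {} \<subseteq> E \<and> finite {} \<and> card {} = Suc k - 1 \<and> (\<forall>e\<in>{}. e \<subseteq> {v0})
        \<and> (\<forall>u\<in>{v0}. \<forall>v\<in>{v0}. \<exists>p. wk {} p \<and> hd p = u \<and> last p = v)"
        using v0 True by (auto intro!: exI[of _ "[v0]"])
      then show ?thesis by blast
    next
      case False
      then obtain S T where ST: "S \<subseteq> V" "card S = k" "T \<subseteq> E" "finite T" "card T = k - 1" "\<forall>e\<in>T. e \<subseteq> S"
        "\<forall>u\<in>S. \<forall>v\<in>S. \<exists>p. wk T p \<and> hd p = u \<and> last p = v"
        using Suc by auto
      have "S \<noteq> V" using ST(2) Suc.prems by auto
      then obtain v where v: "v \<in> V" "v \<notin> S" using ST(1) by blast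
      have "S \<noteq> {}" using ST(2) False by auto
      then obtain u where u: "u \<in> S" by blast
      obtain p where p: "wk E p" "hd p = u" "last p = v" using conn[of u v] u v ST(1) by blast
      obtain a b where ab: "{a,b} \<in> E" "a \<in> S" "b \<notin> S" using wk_leave[OF p(1)] p u v by blast
      have bV: "b \<in> V" using edge_V[OF ab(1)] by simp
      have finS: "finite S" using ST(1) finV finite_subset by blast
      have abT: "{a,b} \<notin> T" using ST(6) ab(3) by blast
      define S' where "S' = insert b S"
      define T' where "T' = insert {a,b} T"
      have TT': "T \<subseteq> T'" using T'_def by blast
      have abT': "{a,b} \<in> T'" "{b,a} \<in> T'" using T'_def by (auto simp: insert_commute)
      have reachS: "\<exists>p. wk T' p \<and> hd p = x \<and> last p = y" if "x \<in> S" "y \<in> S" for x y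
        using ST(7) that wk_mono[OF _ TT'] by blast
      have reach: "\<exists>p. wk T' p \<and> hd p = x \<and> last p = y" if xS: "x \<in> S'" "y \<in> S'" for x y
      proof -
        consider "x \<in> S" "y \<in> S" | "x = b" "y = b" | "x = b" "y \<in> S" | "x \<in> S" "y = b"
          using xS S'_def by blast
        then show ?thesis
        proof cases
          case 1 then show ?thesis using reachS by blast
        next
          case 2 then show ?thesis by (intro exI[of _ "[b]"]) simp
        next
          case 3
          obtain q where q: "wk T' q" "hd q = a" "last q = y" using reachS[OF ab(2) 3(2)] by blast
          have "wk T' [b,a]" using abT' by simp
          then show ?thesis using wk_join[of T' "[b,a]" q] q 3 by (intro exI[of _ "butlast [b,a] @ q"]) simp
        next
          case 4
          obtain q where q: "wk T' q" "hd q = x" "last q = a" using reachS[OF 4(1) ab(2)] by blast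
          have "wk T' [a,b]" using abT' by simp
          then show ?thesis using wk_join[of T' q "[a,b]"] q 4 by (intro exI[of _ "butlast q @ [a,b]"]) simp
        qed
      qed
      have f1: "S' \<subseteq> V" using S'_def ST(1) bV by simp
      have f2: "card S' = Suc k" using S'_def finS ab(3) ST(2) by simp
      have f3: "T' \<subseteq> E" using T'_def ST(3) ab(1) by simp
      have f4: "finite T'" using T'_def ST(4) by simp
      have f5: "card T' = Suc k - 1" using T'_def ST(4,5) abT False by simp
      have f6: "\<forall>e\<in>T'. e \<subseteq> S'" using T'_def S'_def ST(6) ab(2) by blast
      have R: "\<forall>u\<in>S'. \<forall>v\<in>S'. \<exists>p. wk T' p \<and> hd p = u \<and> last p = v" using reach by blast
      show ?thesis by (intro exI[of _ S'] exI[of _ T'] conjI f1 f2 f3 f4 f5 f6 R)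
    qed
  qed
  have "1 \<le> card V" using Vne finV by (simp add: Suc_le_eq card_gt_0_iff)
  then obtain S T where ST: "S \<subseteq> V" "card S = card V" "T \<subseteq> E" "card T = card V - 1"
    "\<forall>u\<in>S. \<forall>v\<in>S. \<exists>p. wk T p \<and> hd p = u \<and> last p = v"
    using grow[of "card V"] by blast
  have "S = V" using card_subset_eq[OF finV ST(1) ST(2)] .
  then show ?thesis using ST by auto
qed

end

theorem corollary4p1:
  fixes G :: "'a graph"
  assumes "simple_graph G" and "connected_graph G" and "cubic G"
  shows "rc (line_graph (line_graph G)) \<le> card (fst G) + 1"
proof -
  obtain V E where G: "G = (V,E)" by (cases G)
  have sg: "finite V" "\<And>e. e \<in> E \<Longrightarrow> \<exists>u v. u \<in> V \<and> v \<in> V \<and> u \<noteq> v \<and> e = {u,v}"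
    using assms(1) G unfolding simple_graph_def by auto
  have dg: "\<And>v. v \<in> V \<Longrightarrow> card {e \<in> E. v \<in> e} = 3"
    using assms(3) G unfolding cubic_def degree_def by auto
  have cb: "cub V E" using sg dg by (simp add: cub_def)
  have Vne: "V \<noteq> {}" using assms(2) G unfolding connected_graph_def by simp
  have conn: "\<exists>p. wk E p \<and> hd p = u \<and> last p = v" if "u \<in> V" "v \<in> V" for u v
    using assms(2) G that unfolding connected_graph_def is_path_wk by auto
  obtain T where T: "T \<subseteq> E" "card T \<le> card V - 1" "\<forall>u\<in>V. \<forall>v\<in>V. \<exists>p. wk T p \<and> hd p = u \<and> last p = v"
    using cub.spanning[OF cb conn Vne] by blast
  have finT: "finite T" using cub.finE[OF cb] T(1) finite_subset by blast
  obtain idx where idx: "bij_betw idx T {0..<card T}" using ex_bij_betw_finite_nat[OF finT] by blast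
  have m1: "1 \<le> card V" using Vne sg(1) by (simp add: Suc_le_eq card_gt_0_iff)
  have ax: "cubT_axioms V E T idx (card V)"
  proof (rule cubT_axioms.intro)
    show "T \<subseteq> E" by (rule T(1))
    show "inj_on idx T" using idx bij_betw_def by blast
    show "\<And>g. g \<in> T \<Longrightarrow> idx g < card V - 1" using idx T(2) bij_betwE by fastforce
    show "1 \<le> card V" by (rule m1)
    show "\<And>u v. u \<in> V \<Longrightarrow> v \<in> V \<Longrightarrow> \<exists>p. wk T p \<and> hd p = u \<and> last p = v" using T(3) by blast
  qed
  have ct: "cubT V E T idx (card V)" using cubT.intro[OF cb ax] .
  have rcn: "rainbow_connected (cub.LV E, cub.L2 E) (cubT.col E T idx (card V))"
    using cubT.rc_conn[OF ct] .
  have lg: "line_graph (line_graph G) = (cub.LV E, cub.L2 E)"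
    using G cub.LG1[OF cb] cub.LG2[OF cb] by simp
  have "\<forall>e\<in>cub.L2 E. cubT.col E T idx (card V) e < card V + 1"
    using cubT.col_le[OF ct] by (simp add: le_imp_less_Suc)
  then have "\<exists>c. (\<forall>e\<in>snd (line_graph (line_graph G)). c e < card (fst G) + 1) \<and> rainbow_connected (line_graph (line_graph G)) c"
    using rcn lg G by auto
  then show ?thesis unfolding rc_def by (rule Least_le)
qed


end
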